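(* Let $W:\Omega^2\to[0,1]$ be a graphon and $F$ a graph on vertex set $[k]$. Suppose that $\mathfrak{c}:\Omega\to[0,1]$ is a fractional $F$-cover of $W$ and that $\mathfrak{t}:\Omega^k\to[0,1]$ is an $F$-tiling in $W$. Then $\|\mathfrak{t}\|\le\|\mathfrak{c}\|$.
   Context: $(\Omega,\nu)$ is an atomless Borel probability space; a graphon is a symmetric measurable $W:\Omega^2\to[0,1]$. $W^{\otimes F}(x_1,\dots,x_k)=\prod_{ij\in E(F),i<j}W(x_i,x_j)$ and $\mathcal{F}_F(W)=\{W^{\otimes F}\neq0\}$. An $F$-tiling in $W$ is a measurable $\mathfrak{t}:\Omega^k\to[0,\infty)$ with $\{\mathfrak{t}\neq0\}\subset\mathcal{F}_F(W)$ such that for each $x\in\Omega$, $\sum_{\ell=1}^k\int\mathfrak{t}(x_1,\dots,x_{\ell-1},x,x_{\ell+1},\dots,x_k)\,\mathrm{d}\nu^{k-1}\le1$ (integrating over all coordinates except the $\ell$-th); its size is $\|\mathfrak{t}\|=\int\mathfrak{t}\,\mathrm{d}\nu^k$. A fractional $F$-cover of $W$ is a measurable $\mathfrak{c}:\Omega\to[0,1]$ with $\nu^k\big(\mathcal{F}_F(W)\cap\{(x_1,\dots,x_k):\sum_{i=1}^k\mathfrak{c}(x_i)<1\}\big)=0$; its size is $\|\mathfrak{c}\|=\int\mathfrak{c}\,\mathrm{d}\nu$. *)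

theory Defs
  imports "HOL-Probability.Probability"
begin

definition atomless :: "'a measure \<Rightarrow> bool" where
  "atomless M \<longleftrightarrow> (\<forall>A\<in>sets M. emeasure M A > 0 \<longrightarrow>
      (\<exists>B\<in>sets M. B \<subseteq> A \<and> 0 < emeasure M B \<and> emeasure M B < emeasure M A))"

definition atomless_borel_prob :: "('a::polish_space) measure \<Rightarrow> bool" where
  "atomless_borel_prob M \<longleftrightarrow> prob_space M \<and> sets M = sets borel \<and> atomless M"

definition graphon :: "'a measure \<Rightarrow> ('a \<Rightarrow> 'a \<Rightarrow> real) \<Rightarrow> bool" where
  "graphon M W \<longleftrightarrow> (\<lambda>(x, y). W x y) \<in> borel_measurable (M \<Otimes>\<^sub>M M)
     \<and> (\<forall>x\<in>space M. \<forall>y\<in>space M. W x y = W y x \<and> 0 \<le> W x y \<and> W x y \<le> 1)"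

definition graph_on :: "nat \<Rightarrow> (nat \<times> nat) set \<Rightarrow> bool" where
  "graph_on k F \<longleftrightarrow> F \<subseteq> {(i, j). i < j \<and> j < k}"

abbreviation powM :: "'a measure \<Rightarrow> nat \<Rightarrow> (nat \<Rightarrow> 'a) measure" where
  "powM M k \<equiv> PiM {..<k} (\<lambda>_. M)"

definition tensorF :: "(nat \<times> nat) set \<Rightarrow> ('a \<Rightarrow> 'a \<Rightarrow> real) \<Rightarrow> (nat \<Rightarrow> 'a) \<Rightarrow> real" where
  "tensorF F W x = (\<Prod>(i, j)\<in>F. W (x i) (x j))"

definition copiesF :: "'a measure \<Rightarrow> nat \<Rightarrow> (nat \<times> nat) set \<Rightarrow> ('a \<Rightarrow> 'a \<Rightarrow> real) \<Rightarrow> (nat \<Rightarrow> 'a) set" where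
  "copiesF M k F W = {x \<in> space (powM M k). tensorF F W x \<noteq> 0}"

definition F_tiling :: "'a measure \<Rightarrow> nat \<Rightarrow> (nat \<times> nat) set \<Rightarrow> ('a \<Rightarrow> 'a \<Rightarrow> real)
    \<Rightarrow> ((nat \<Rightarrow> 'a) \<Rightarrow> real) \<Rightarrow> bool" where
  "F_tiling M k F W t \<longleftrightarrow>
     t \<in> borel_measurable (powM M k)
   \<and> (\<forall>x\<in>space (powM M k). 0 \<le> t x)
   \<and> {x \<in> space (powM M k). t x \<noteq> 0} \<subseteq> copiesF M k F W
   \<and> (\<forall>x\<in>space M. (\<Sum>l<k. \<integral>\<^sup>+ y. ennreal (t (y(l := x))) \<partial>(PiM ({..<k} - {l}) (\<lambda>_. M))) \<le> 1)"

definition tiling_size :: "'a measure \<Rightarrow> nat \<Rightarrow> ((nat \<Rightarrow> 'a) \<Rightarrow> real) \<Rightarrow> ennreal" where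
  "tiling_size M k t = (\<integral>\<^sup>+ x. ennreal (t x) \<partial>(powM M k))"

definition frac_F_cover :: "'a measure \<Rightarrow> nat \<Rightarrow> (nat \<times> nat) set \<Rightarrow> ('a \<Rightarrow> 'a \<Rightarrow> real)
    \<Rightarrow> ('a \<Rightarrow> real) \<Rightarrow> bool" where
  "frac_F_cover M k F W c \<longleftrightarrow>
     c \<in> borel_measurable M
   \<and> (\<forall>x\<in>space M. 0 \<le> c x \<and> c x \<le> 1)
   \<and> (AE x in powM M k. tensorF F W x \<noteq> 0 \<longrightarrow> 1 \<le> (\<Sum>i<k. c (x i)))"

definition cover_size :: "'a measure \<Rightarrow> ('a \<Rightarrow> real) \<Rightarrow> ennreal" where
  "cover_size M c = (\<integral>\<^sup>+ x. ennreal (c x) \<partial>M)"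

end

theory Submission
  imports Defs
begin

lemma key_i:
  fixes M :: "'a measure" and t :: "(nat \<Rightarrow> 'a) \<Rightarrow> real" and c :: "'a \<Rightarrow> real"
  assumes P: "prob_space M" and tm: "t \<in> borel_measurable (powM M k)"
    and cm: "c \<in> borel_measurable M" and i: "i < k"
  shows "(\<integral>\<^sup>+x. ennreal (t x) * ennreal (c (x i)) \<partial>powM M k)
       = (\<integral>\<^sup>+z. ennreal (c z) * (\<integral>\<^sup>+y. ennreal (t (y(i:=z))) \<partial>PiM ({..<k}-{i}) (\<lambda>_. M)) \<partial>M)"
proof -
  interpret prob_space M by fact
  interpret product_sigma_finite "\<lambda>_. M" by unfold_locales
  define I where "I = {..<k} - {i}"
  have kI: "{..<k} = insert i I" using i by (auto simp: I_def)
  have fI: "finite I" "i \<notin> I" by (auto simp: I_def)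
  interpret PI: prob_space "PiM I (\<lambda>_. M)" by (rule prob_space_PiM) (rule P)
  interpret pair_sigma_finite "PiM I (\<lambda>_. M)" M by unfold_locales
  have tm': "t \<in> borel_measurable (PiM (insert i I) (\<lambda>_. M))" using tm kI by simp
  have "(\<integral>\<^sup>+x. ennreal (t x) * ennreal (c (x i)) \<partial>powM M k)
      = (\<integral>\<^sup>+x. ennreal (t x) * ennreal (c (x i)) \<partial>PiM (insert i I) (\<lambda>_. M))"
    using kI by simp
  also have "\<dots> = (\<integral>\<^sup>+ y. (\<integral>\<^sup>+ z. ennreal (t (y(i:=z))) * ennreal (c z) \<partial>M) \<partial>PiM I (\<lambda>_. M))"
    by (subst product_nn_integral_insert[OF fI]) (use tm' cm in \<open>auto\<close>)
  also have "\<dots> = (\<integral>\<^sup>+ z. (\<integral>\<^sup>+ y. ennreal (t (y(i:=z))) * ennreal (c z) \<partial>PiM I (\<lambda>_. M)) \<partial>M)"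
  proof (rule Fubini'[symmetric, where f="\<lambda>y z. ennreal (t (y(i:=z))) * ennreal (c z)"])
    have "(\<lambda>(y,z). t (y(i:=z))) \<in> borel_measurable (PiM I (\<lambda>_. M) \<Otimes>\<^sub>M M)"
      using measurable_compose[OF measurable_add_dim[where i=i and I=I and M="\<lambda>_. M"] tm'] by (simp add: case_prod_beta')
    then show "(\<lambda>(y,z). ennreal (t (y(i:=z))) * ennreal (c z)) \<in> borel_measurable (PiM I (\<lambda>_. M) \<Otimes>\<^sub>M M)"
      using cm by measurable
  qed
  also have "\<dots> = (\<integral>\<^sup>+z. ennreal (c z) * (\<integral>\<^sup>+y. ennreal (t (y(i:=z))) \<partial>PiM I (\<lambda>_. M)) \<partial>M)"
  proof (rule nn_integral_cong)
    fix z assume "z \<in> space M"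
    have "(\<lambda>y. t (y(i:=z))) \<in> borel_measurable (PiM I (\<lambda>_. M))"
      using tm' \<open>z \<in> space M\<close> by measurable
    then show "(\<integral>\<^sup>+ y. ennreal (t (y(i:=z))) * ennreal (c z) \<partial>PiM I (\<lambda>_. M))
        = ennreal (c z) * (\<integral>\<^sup>+y. ennreal (t (y(i:=z))) \<partial>PiM I (\<lambda>_. M))"
      by (subst nn_integral_multc) (auto simp: mult.commute)
  qed
  finally show ?thesis by (simp add: I_def)
qed

lemma meas_i:
  fixes M :: "'a measure" and t :: "(nat \<Rightarrow> 'a) \<Rightarrow> real"
  assumes P: "prob_space M" and tm: "t \<in> borel_measurable (powM M k)" and i: "i < k"
    and cmm: "c \<in> borel_measurable M"
  shows "(\<lambda>z. ennreal (c z) * (\<integral>\<^sup>+y. ennreal (t (y(i:=z))) \<partial>PiM ({..<k}-{i}) (\<lambda>_. M))) \<in> borel_measurable M"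
proof -
  define I where "I = {..<k} - {i}"
  have kI: "{..<k} = insert i I" using i by (auto simp: I_def)
  interpret PI: prob_space "PiM I (\<lambda>_. M)" by (rule prob_space_PiM) (rule P)
  have tm': "t \<in> borel_measurable (PiM (insert i I) (\<lambda>_. M))" using tm kI by simp
  have "(\<lambda>(y,z). t (y(i:=z))) \<in> borel_measurable (PiM I (\<lambda>_. M) \<Otimes>\<^sub>M M)"
    using measurable_compose[OF measurable_add_dim[where i=i and I=I and M="\<lambda>_. M"] tm'] by (simp add: case_prod_beta')
  then have "(\<lambda>(z,y). ennreal (t (y(i:=z)))) \<in> borel_measurable (M \<Otimes>\<^sub>M PiM I (\<lambda>_. M))"
    by measurable
  then have "(\<lambda>z. (\<integral>\<^sup>+y. ennreal (t (y(i:=z))) \<partial>PiM I (\<lambda>_. M))) \<in> borel_measurable M"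
    by (rule PI.borel_measurable_nn_integral[where f="\<lambda>z y. ennreal (t (y(i:=z)))"])
  then show ?thesis using cmm unfolding I_def by measurable
qed

theorem proposition4p1:
  fixes M :: "('a::polish_space) measure"
    and W :: "'a \<Rightarrow> 'a \<Rightarrow> real"
    and k :: nat and F :: "(nat \<times> nat) set"
    and c :: "'a \<Rightarrow> real" and t :: "(nat \<Rightarrow> 'a) \<Rightarrow> real"
  assumes "atomless_borel_prob M"
    and "graphon M W"
    and "graph_on k F"
    and "frac_F_cover M k F W c"
    and "F_tiling M k F W t"
    and "\<forall>x\<in>space (powM M k). t x \<le> 1"
  shows "tiling_size M k t \<le> cover_size M c"
proof -
  have P: "prob_space M" using assms(1) by (simp add: atomless_borel_prob_def)
  have cm: "c \<in> borel_measurable M" and c01: "\<forall>x\<in>space M. 0 \<le> c x \<and> c x \<le> 1"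
    and AEc: "AE x in powM M k. tensorF F W x \<noteq> 0 \<longrightarrow> 1 \<le> (\<Sum>i<k. c (x i))"
    using assms(4) by (auto simp: frac_F_cover_def)
  have tm: "t \<in> borel_measurable (powM M k)" and t0: "\<forall>x\<in>space (powM M k). 0 \<le> t x"
    and tsupp: "{x \<in> space (powM M k). t x \<noteq> 0} \<subseteq> copiesF M k F W"
    and tb: "\<forall>x\<in>space M. (\<Sum>l<k. \<integral>\<^sup>+ y. ennreal (t (y(l := x))) \<partial>(PiM ({..<k} - {l}) (\<lambda>_. M))) \<le> 1"
    using assms(5) by (auto simp: F_tiling_def)
  have "tiling_size M k t = (\<integral>\<^sup>+x. ennreal (t x) \<partial>powM M k)" by (simp add: tiling_size_def)
  also have "\<dots> \<le> (\<integral>\<^sup>+x. (\<Sum>i<k. ennreal (t x) * ennreal (c (x i))) \<partial>powM M k)"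
  proof (rule nn_integral_mono_AE)
    show "AE x in powM M k. ennreal (t x) \<le> (\<Sum>i<k. ennreal (t x) * ennreal (c (x i)))"
      using AEc AE_space
    proof eventually_elim
      case (elim x)
      show ?case
      proof (cases "x \<in> space (powM M k) \<and> t x \<noteq> 0")
        case True
        then have "tensorF F W x \<noteq> 0" using tsupp by (auto simp: copiesF_def)
        with elim have s1: "1 \<le> (\<Sum>i<k. c (x i))" by simp
        have cx: "\<forall>i<k. 0 \<le> c (x i)" using True c01 by (auto simp: space_PiM PiE_def Pi_def)
        have tx0: "0 \<le> t x" using t0 True by auto
        have e1: "ennreal (t x * (\<Sum>i<k. c (x i))) = ennreal (\<Sum>i<k. t x * c (x i))"
          by (simp add: sum_distrib_left)
        have e2: "\<dots> = (\<Sum>i<k. ennreal (t x * c (x i)))"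
          by (rule sum_ennreal[symmetric]) (use cx tx0 in auto)
        have e3: "\<dots> = (\<Sum>i<k. ennreal (t x) * ennreal (c (x i)))"
          by (rule sum.cong) (use cx tx0 in \<open>auto simp: ennreal_mult\<close>)
        have "t x \<le> t x * (\<Sum>i<k. c (x i))"
          using s1 tx0 by (metis mult_left_mono mult.right_neutral)
        then have "ennreal (t x) \<le> ennreal (t x * (\<Sum>i<k. c (x i)))" by (rule ennreal_leI)
        then show ?thesis using e1 e2 e3 by simp
      next
        case False
        with elim show ?thesis by auto
      qed
    qed
  qed
  also have "\<dots> = (\<Sum>i<k. \<integral>\<^sup>+x. ennreal (t x) * ennreal (c (x i)) \<partial>powM M k)"
    by (rule nn_integral_sum) (use tm cm in measurable)
  also have "\<dots> = (\<Sum>i<k. \<integral>\<^sup>+z. ennreal (c z) * (\<integral>\<^sup>+y. ennreal (t (y(i:=z))) \<partial>PiM ({..<k}-{i}) (\<lambda>_. M)) \<partial>M)"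
    by (rule sum.cong) (auto intro!: key_i P tm cm)
  also have "\<dots> = (\<integral>\<^sup>+z. ennreal (c z) * (\<Sum>i<k. \<integral>\<^sup>+y. ennreal (t (y(i:=z))) \<partial>PiM ({..<k}-{i}) (\<lambda>_. M)) \<partial>M)"
    by (simp add: sum_distrib_left, subst nn_integral_sum) (auto intro!: meas_i P tm cm)
  also have "\<dots> \<le> (\<integral>\<^sup>+z. ennreal (c z) \<partial>M)"
    by (rule nn_integral_mono) (use tb in \<open>auto intro: mult_left_le\<close>)
  finally show ?thesis by (simp add: cover_size_def)
qed

end
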